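(* Let $k\ge 1$ be an integer and $c$ a real number with $40\le c\le k$. Let $F$ be the distribution on $\{0,1\}$ with $\mathbb{P}(1) = c/k$. Then $BRev(F^k)/SRev(F^k) > 0.56$.
   Context: For i.i.d. values $X_1,\dots,X_k\sim F$ of an additive buyer: $SRev(F^k) = k\cdot\sup_{p\ge0} p\,\mathbb{P}(X_1\ge p)$ is the maximal revenue from selling each item separately at posted prices, and $BRev(F^k) = \sup_{p\ge 0} p\,\mathbb{P}(X_1+\dots+X_k\ge p)$ is the maximal revenue from selling all items as one bundle at a posted price. For the given $F$, $SRev(F^k)=c$. *)

theory Defs
  imports "HOL-Probability.Probability"
begin

definition sum_dist :: "real pmf \<Rightarrow> nat \<Rightarrow> real pmf" where
  "sum_dist F k = map_pmf (\<lambda>x. \<Sum>i<k. x i) (Pi_pmf {..<k} 0 (\<lambda>_. F))"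

definition SRev :: "real pmf \<Rightarrow> nat \<Rightarrow> real" where
  "SRev F k = real k * (SUP p\<in>{0..}. p * measure_pmf.prob F {p..})"

definition BRev :: "real pmf \<Rightarrow> nat \<Rightarrow> real" where
  "BRev F k = (SUP p\<in>{0..}. p * measure_pmf.prob (sum_dist F k) {p..})"

definition bern01 :: "real \<Rightarrow> real pmf" where
  "bern01 q = map_pmf (\<lambda>b. if b then 1 else 0) (bernoulli_pmf q)"

end

theory Submission
  imports Defs
begin

lemma sum_dist_bern:
  assumes q: "q \<in> {0..1}"
  shows "sum_dist (bern01 q) k = map_pmf real (binomial_pmf k q)"
proof -
  have eq1: "(\<Sum>i<k. (if x i then 1 else 0::real)) = real (card {i\<in>{..<k}. x i})" for x :: "nat \<Rightarrow> bool"
  proof -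
    have "(\<Sum>i<k. if x i then 1 else (0::real)) = (\<Sum>i\<in>{i\<in>{..<k}. x i}. 1)"
      by (intro sum.mono_neutral_cong_right) auto
    thus ?thesis by simp
  qed
  have "sum_dist (bern01 q) k = map_pmf (\<lambda>x. \<Sum>i<k. x i)
      (map_pmf (\<lambda>h. (\<lambda>b. if b then 1 else 0::real) \<circ> h) (Pi_pmf {..<k} False (\<lambda>_. bernoulli_pmf q)))"
    unfolding sum_dist_def bern01_def by (subst Pi_pmf_map) auto
  also have "\<dots> = map_pmf real (map_pmf (\<lambda>f. card {x\<in>{..<k}. f x}) (Pi_pmf {..<k} False (\<lambda>_. bernoulli_pmf q)))"
    by (simp add: pmf.map_comp o_def eq1)
  also have "\<dots> = map_pmf real (binomial_pmf k q)"
    using binomial_pmf_altdef'[of "{..<k}" k q False] q by simp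
  finally show ?thesis .
qed

lemma srev_sup:
  assumes q: "q \<in> {0..1}"
  shows "(SUP p\<in>{0..}. p * measure_pmf.prob (bern01 q) {p..}) = q"
proof -
  have pr: "measure_pmf.prob (bern01 q) {p..} = (if p \<le> 0 then 1 else if p \<le> 1 then q else 0)" for p :: real
  proof -
    have "measure_pmf.prob (bern01 q) {p..} = measure_pmf.prob (bernoulli_pmf q) ((\<lambda>b. if b then 1 else 0::real) -` {p..})"
      unfolding bern01_def by (simp add: measure_map_pmf)
    also have "(\<lambda>b. if b then 1 else 0::real) -` {p..} = (if p \<le> 0 then UNIV else if p \<le> 1 then {True} else {})"
      by (auto split: if_splits)
    finally show ?thesis using q by (auto simp: measure_pmf_single)
  qed
  show ?thesis
  proof (rule cSup_eq_maximum)
    show "q \<in> (\<lambda>p. p * measure_pmf.prob (bern01 q) {p..}) ` {0..}"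
      by (rule image_eqI[of _ _ 1]) (auto simp: pr)
    fix y assume "y \<in> (\<lambda>p. p * measure_pmf.prob (bern01 q) {p..}) ` {0..}"
    then obtain p where "p \<ge> 0" "y = p * measure_pmf.prob (bern01 q) {p..}" by auto
    then show "y \<le> q" using q by (auto simp: pr mult_left_le_one_le)
  qed
qed
lemma set_binom_le:
  assumes q: "q \<in> {0..1}" and "a \<in> set_pmf (binomial_pmf k q)"
  shows "a \<le> k"
  using assms by (auto simp: set_pmf_binomial_eq split: if_splits)

lemma mgf_binom:
  assumes q: "q \<in> {0..1}"
  shows "(\<integral>n. r ^ n * e \<partial>measure_pmf (binomial_pmf k q)) = e * (r * q + (1 - q)) ^ k"
proof -
  have "(\<integral>n. r ^ n * e \<partial>measure_pmf (binomial_pmf k q)) =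
        (\<Sum>a\<in>{..k}. r ^ a * e * pmf (binomial_pmf k q) a)"
    by (rule integral_measure_pmf_real) (use set_binom_le[OF q] in auto)
  also have "\<dots> = e * (\<Sum>a\<in>{..k}. real (k choose a) * (r * q) ^ a * (1 - q) ^ (k - a))"
    using q by (simp add: sum_distrib_left power_mult_distrib mult_ac)
  also have "\<dots> = e * (r * q + (1 - q)) ^ k"
    by (simp add: binomial_ring)
  finally show ?thesis .
qed

lemma chernoff:
  fixes q A :: real and k :: nat
  assumes q: "q \<in> {0..1}"
  shows "measure_pmf.prob (binomial_pmf k q) {n. real n \<le> A}
           \<le> exp (- ln (7/10) * A) * ((7/10) * q + (1 - q)) ^ k"
proof -
  define t :: real where "t = ln (7/10)"
  have t: "t < 0" unfolding t_def by simp
  have r: "(7/10::real) ^ n = exp (t * real n)" for n :: nat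
  proof -
    have "exp (real n * t) = exp t ^ n" by (rule exp_of_nat_mult)
    moreover have "exp t = 7/10" unfolding t_def by simp
    ultimately show ?thesis by (simp add: mult.commute)
  qed
  have fin: "finite (set_pmf (binomial_pmf k q))"
    using q by auto
  have "measure_pmf.prob (binomial_pmf k q) {n. real n \<le> A}
        = (\<integral>n. indicator {n. real n \<le> A} n \<partial>measure_pmf (binomial_pmf k q))"
    by (simp add: integral_indicator)
  also have "\<dots> \<le> (\<integral>n. (7/10) ^ n * exp (- t * A) \<partial>measure_pmf (binomial_pmf k q))"
  proof (rule integral_mono)
    show "integrable (measure_pmf (binomial_pmf k q)) (indicat_real {n. real n \<le> A})"
      by (rule integrable_measure_pmf_finite[OF fin])
    show "integrable (measure_pmf (binomial_pmf k q)) (\<lambda>n. (7/10) ^ n * exp (- t * A))"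
      by (rule integrable_measure_pmf_finite[OF fin])
    fix n :: nat
    show "indicat_real {n. real n \<le> A} n \<le> (7/10) ^ n * exp (- t * A)"
    proof (cases "real n \<le> A")
      case True
      have "0 \<le> t * (real n - A)" using t True by (simp add: mult_nonpos_nonpos)
      hence "1 \<le> exp (t * (real n - A))" by simp
      also have "exp (t * (real n - A)) = (7/10) ^ n * exp (- t * A)"
        by (simp add: r exp_add[symmetric] algebra_simps)
      finally show ?thesis using True by simp
    qed simp
  qed
  also have "\<dots> = exp (- t * A) * ((7/10) * q + (1 - q)) ^ k"
    by (rule mgf_binom[OF q])
  finally show ?thesis unfolding t_def .
qed

lemma exp_num1: "ln (7/10::real) \<ge> -(9/25)"
proof -
  have "((101/100)::real) ^ 36 \<le> exp (1/100) ^ 36"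
    by (rule power_mono) (use exp_ge_add_one_self[of "(1/100)::real"] in auto)
  also have "exp ((1/100)::real) ^ 36 = exp (9/25)"
    by (simp add: exp_of_nat_mult[symmetric])
  finally have "10/7 \<le> exp ((9/25)::real)" by (simp add: power_divide)
  hence "exp (-(9/25)::real) \<le> 7/10" by (simp add: exp_minus field_simps)
  thus ?thesis by (simp add: ln_ge_iff)
qed

lemma exp_num2: "exp (-48/25::real) < (1/5)"
proof -
  have "((31/25)::real) ^ 8 \<le> exp (6/25) ^ 8"
    by (rule power_mono) (use exp_ge_add_one_self[of "(6/25)::real"] in auto)
  also have "exp ((6/25)::real) ^ 8 = exp (48/25)"
    by (simp add: exp_of_nat_mult[symmetric])
  finally have "5 < exp (48/25::real)" by (simp add: power_divide)
  thus ?thesis by (simp add: exp_minus field_simps)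
qed

lemma tail_bound:
  fixes k :: nat and c :: real
  assumes "k \<ge> 1" and "40 \<le> c" and "c \<le> real k"
  shows "measure_pmf.prob (binomial_pmf k (c / k)) {n. real n \<le> (7/10) * c} < (1/5)"
proof -
  define q where "q = c / k"
  have q: "q \<in> {0..1}" "0 < q" using assms by (auto simp: q_def)
  have kq: "real k * q = c" using assms by (simp add: q_def)
  have "measure_pmf.prob (binomial_pmf k q) {n. real n \<le> (7/10) * c}
     \<le> exp (- ln (7/10) * ((7/10) * c)) * ((7/10) * q + (1 - q)) ^ k"
    by (rule chernoff[OF q(1)])
  also have "((7/10) * q + (1 - q)) ^ k \<le> exp (- (3/10) * q) ^ k"
    by (rule power_mono) (use q exp_ge_add_one_self[of "- (3/10) * q"] in auto)
  also have "exp (- (3/10) * q) ^ k = exp (- (3/10) * c)"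
    by (simp add: exp_of_nat_mult[symmetric] kq[symmetric] mult_ac)
  also have "exp (- ln (7/10) * ((7/10) * c)) * exp (- (3/10) * c) = exp (- ln (7/10) * ((7/10) * c) - (3/10) * c)"
    by (simp add: exp_add[symmetric])
  also have "\<dots> \<le> exp (-48/25)"
  proof -
    have "- ln (7/10) * ((7/10) * c) \<le> (9/25) * ((7/10) * c)"
      by (rule mult_right_mono) (use exp_num1 assms in auto)
    moreover have "(9/25) * ((7/10) * c) = (63/250) * (c::real)" by simp
    ultimately have L: "- ln (7/10) * ((7/10) * c) \<le> (63/250) * c" by linarith
    have "- ln (7/10) * ((7/10) * c) - (3/10) * c \<le> -48/25"
      using L assms by linarith
    thus ?thesis by simp
  qed
  also have "\<dots> < (1/5)" by (rule exp_num2)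
  finally show ?thesis
    by (simp add: q_def)
qed

theorem lemma1:
  fixes k :: nat and c :: real
  assumes "k \<ge> 1" and "40 \<le> c" and "c \<le> real k"
  shows "BRev (bern01 (c / real k)) k / SRev (bern01 (c / real k)) k > 0.56"
proof -
  define q where "q = c / real k"
  have q: "q \<in> {0..1}" "0 < q" using assms by (auto simp: q_def)
  have kq: "real k * q = c" using assms by (simp add: q_def)
  have S: "SRev (bern01 q) k = c"
    unfolding SRev_def srev_sup[OF q(1)] by (rule kq)
  define B where "B = binomial_pmf k q"
  define A :: real where "A = 7/10 * c"
  have SD: "sum_dist (bern01 q) k = map_pmf real B"
    unfolding B_def by (rule sum_dist_bern[OF q(1)])
  have pr: "measure_pmf.prob (map_pmf real B) {p..} = measure_pmf.prob B {n. p \<le> real n}" for p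
    by (simp add: measure_map_pmf vimage_def)
  have bdd: "bdd_above ((\<lambda>p. p * measure_pmf.prob (map_pmf real B) {p..}) ` {0..})"
  proof (rule bdd_aboveI2)
    fix p :: real assume p: "p \<in> {0..}"
    show "p * measure_pmf.prob (map_pmf real B) {p..} \<le> real k"
    proof (cases "p \<le> real k")
      case True
      have "p * measure_pmf.prob (map_pmf real B) {p..} \<le> p * 1"
        by (rule mult_left_mono) (use p in auto)
      thus ?thesis using True by simp
    next
      case False
      have "measure_pmf.prob B {n. p \<le> real n} = 0"
        unfolding measure_pmf_zero_iff using False set_binom_le[OF q(1), of _ k]
        by (force simp: B_def)
      thus ?thesis by (subst pr) simp
    qed
  qed
  have tail: "measure_pmf.prob B {n. real n \<le> A} < 1/5"
    unfolding B_def A_def q_def by (rule tail_bound[OF assms])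
  have "1 = measure_pmf.prob B ({n. real n \<le> A} \<union> {n. A \<le> real n})"
  proof -
    have "{n. real n \<le> A} \<union> {n. A \<le> real n} = space (measure_pmf B)" by auto
    thus ?thesis by (simp add: measure_pmf.prob_space)
  qed
  also have "\<dots> \<le> measure_pmf.prob B {n. real n \<le> A} + measure_pmf.prob B {n. A \<le> real n}"
    by (rule measure_subadditive) (auto simp: measure_pmf.emeasure_eq_measure)
  finally have up: "measure_pmf.prob B {n. A \<le> real n} > 4/5" using tail by linarith
  have "A * (4/5) < A * measure_pmf.prob B {n. A \<le> real n}"
    by (rule mult_strict_left_mono) (use up assms in \<open>auto simp: A_def\<close>)
  also have "\<dots> = A * measure_pmf.prob (map_pmf real B) {A..}" by (subst pr) (rule refl)
  also have "\<dots> \<le> BRev (bern01 q) k"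
    unfolding BRev_def SD by (rule cSUP_upper[OF _ bdd]) (use assms in \<open>auto simp: A_def\<close>)
  finally have "0.56 * c < BRev (bern01 q) k" by (simp add: A_def)
  hence "0.56 < BRev (bern01 q) k / SRev (bern01 q) k"
    using assms by (simp add: S pos_less_divide_eq mult.commute)
  thus ?thesis by (simp add: q_def)
qed

end
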